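(* Let $(n_0^{(m)},n_1^{(m)})_{m\ge 1}$ be a sequence of pairs of integers with $2\le n_0^{(m)}\le n_1^{(m)}$, $n_1^{(m)}\to\infty$, and $n_0^{(m)}=(\log n_1^{(m)})^{\omega(1)}$, i.e. $\frac{\log n_0^{(m)}}{\log\log n_1^{(m)}}\to\infty$ as $m\to\infty$. Writing $n_0=n_0^{(m)}$, $n_1=n_1^{(m)}$, let $k=\frac{\log n_1}{\log n_0}$ and let $x_0$ be the unique root of the equation $x-1-x^{\frac{k-1}{k}}=0$ in the interval $[1,\infty)$. Then $$ch(K_{n_0,n_1})\ge (1-o(1))\frac{\log n_1}{\log x_0}$$ as $m\to\infty$.
   Context: All logarithms are to base 2. For a graph $G=(V,E)$, the choice number $ch(G)$ is the minimum integer $k$ such that for every assignment of a list $S(v)$ of at least $k$ colors to each vertex $v\in V$, there is a proper vertex coloring of $G$ assigning to each vertex $v$ a color from $S(v)$. $K_{n_0,n_1}$ denotes the complete bipartite graph with parts of sizes $n_0$ and $n_1$. *)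

theory Defs
  imports "HOL-Analysis.Analysis"
begin

text \<open>A graph is given by a vertex set V and a symmetric edge relation E.
  Colours are natural numbers (WLOG, lists are finite).\<close>

definition list_colorable :: "'v set \<Rightarrow> ('v \<Rightarrow> 'v \<Rightarrow> bool) \<Rightarrow> ('v \<Rightarrow> nat set) \<Rightarrow> bool" where
  "list_colorable V E S \<longleftrightarrow>
     (\<exists>f. (\<forall>v\<in>V. f v \<in> S v) \<and> (\<forall>u\<in>V. \<forall>v\<in>V. E u v \<longrightarrow> f u \<noteq> f v))"

definition choosable :: "'v set \<Rightarrow> ('v \<Rightarrow> 'v \<Rightarrow> bool) \<Rightarrow> nat \<Rightarrow> bool" where
  "choosable V E k \<longleftrightarrow>
     (\<forall>S. (\<forall>v\<in>V. finite (S v) \<and> k \<le> card (S v)) \<longrightarrow> list_colorable V E S)"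

definition choice_number :: "'v set \<Rightarrow> ('v \<Rightarrow> 'v \<Rightarrow> bool) \<Rightarrow> nat" where
  "choice_number V E = (LEAST k. choosable V E k)"

definition Kbip_V :: "nat \<Rightarrow> nat \<Rightarrow> (nat + nat) set" where
  "Kbip_V n0 n1 = Inl ` {..<n0} \<union> Inr ` {..<n1}"

definition Kbip_E :: "nat + nat \<Rightarrow> nat + nat \<Rightarrow> bool" where
  "Kbip_E u v \<longleftrightarrow> (isl u \<noteq> isl v)"

definition ch_Kbip :: "nat \<Rightarrow> nat \<Rightarrow> nat" where
  "ch_Kbip n0 n1 = choice_number (Kbip_V n0 n1) Kbip_E"

definition root_x0 :: "real \<Rightarrow> real" where
  "root_x0 k = (THE x. 1 \<le> x \<and> x - 1 - x powr ((k - 1) / k) = 0)"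

end

theory Submission
  imports Defs
begin


lemma covering:
  fixes N r t m :: nat
  assumes "t \<le> r" "r \<le> N"
    and cnt: "(N choose r) * ((N choose t) - (r choose t))^m < (N choose t)^m"
  shows "\<exists>g. (\<forall>i<m. g i \<subseteq> {..<N} \<and> card (g i) = t) \<and>
             (\<forall>X. X \<subseteq> {..<N} \<longrightarrow> card X = r \<longrightarrow> (\<exists>i<m. g i \<subseteq> X))"
proof -
  define T where "T = {A. A \<subseteq> {..<N} \<and> card A = t}"
  define R where "R = {X. X \<subseteq> {..<N} \<and> card X = r}"
  define F where "F = PiE {..<m} (\<lambda>_. T)"
  define Bad where "Bad X = PiE {..<m} (\<lambda>_. {A\<in>T. \<not> A \<subseteq> X})" for X
  have cT: "card T = N choose t" unfolding T_def using n_subsets[of "{..<N}" t] by simp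
  have cR: "card R = N choose r" unfolding R_def using n_subsets[of "{..<N}" r] by simp
  have finT: "finite T" unfolding T_def by (rule finite_subset[of _ "Pow {..<N}"]) auto
  have finR: "finite R" unfolding R_def by (rule finite_subset[of _ "Pow {..<N}"]) auto
  have cF: "card F = (N choose t)^m" unfolding F_def by (simp add: card_PiE cT)
  have cBad: "card (Bad X) = ((N choose t) - (r choose t))^m" if "X \<in> R" for X
  proof -
    have X: "X \<subseteq> {..<N}" "card X = r" using that unfolding R_def by auto
    have fX: "finite X" using X(1) finite_subset by blast
    have e: "{A\<in>T. A \<subseteq> X} = {A. A \<subseteq> X \<and> card A = t}"
      unfolding T_def using X by auto
    have c1: "card {A\<in>T. A \<subseteq> X} = r choose t" unfolding e using n_subsets[OF fX, of t] X by simp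
    have "{A\<in>T. \<not> A \<subseteq> X} = T - {A\<in>T. A \<subseteq> X}" by auto
    then have "card {A\<in>T. \<not> A \<subseteq> X} = card T - card {A\<in>T. A \<subseteq> X}"
      using finT by (simp add: card_Diff_subset)
    then show ?thesis unfolding Bad_def by (simp add: card_PiE c1 cT)
  qed
  have finBad: "finite (Bad X)" for X unfolding Bad_def using finT by (intro finite_PiE) auto
  have "card (\<Union>X\<in>R. Bad X) \<le> (\<Sum>X\<in>R. card (Bad X))"
    using finR by (rule card_UN_le)
  also have "\<dots> = (N choose r) * ((N choose t) - (r choose t))^m"
    using cBad cR by simp
  also have "\<dots> < card F" using cnt cF by simp
  finally have "\<not> F \<subseteq> (\<Union>X\<in>R. Bad X)" using finR finBad
    by (meson card_mono finite_UN_I not_le)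
  then obtain g where gF: "g \<in> F" and gn: "\<And>X. X \<in> R \<Longrightarrow> g \<notin> Bad X" by blast
  show ?thesis
  proof (intro exI[of _ g] conjI allI impI)
    fix i assume "i < m"
    then show "g i \<subseteq> {..<N}" "card (g i) = t" using gF unfolding F_def T_def by auto
  next
    fix X assume "X \<subseteq> {..<N}" "card X = r"
    then have "X \<in> R" unfolding R_def by auto
    then have "g \<notin> Bad X" by (rule gn)
    moreover have "g \<in> extensional {..<m}" using gF unfolding F_def by (simp add: PiE_iff)
    ultimately obtain i where "i < m" "g i \<notin> {A\<in>T. \<not> A \<subseteq> X}" unfolding Bad_def PiE_iff by auto
    moreover have "g i \<in> T" using gF \<open>i < m\<close> unfolding F_def by auto
    ultimately show "\<exists>i<m. g i \<subseteq> X" by auto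
  qed
qed

lemma nonchoosable:
  fixes N s t n0 n1 :: nat
  assumes "s \<le> N"
    and gA1: "\<And>i. i<n0 \<Longrightarrow> gA i \<subseteq> {..<N} \<and> card (gA i) = t"
    and gA2: "\<And>X. X \<subseteq> {..<N} \<Longrightarrow> card X = N - s + 1 \<Longrightarrow> \<exists>i<n0. gA i \<subseteq> X"
    and gB1: "\<And>j. j<n1 \<Longrightarrow> gB j \<subseteq> {..<N} \<and> card (gB j) = t"
    and gB2: "\<And>X. X \<subseteq> {..<N} \<Longrightarrow> card X = s \<Longrightarrow> \<exists>j<n1. gB j \<subseteq> X"
  shows "\<not> choosable (Kbip_V n0 n1) Kbip_E t"
proof
  assume ch: "choosable (Kbip_V n0 n1) Kbip_E t"
  define S where "S v = (case v of Inl i \<Rightarrow> gA i | Inr j \<Rightarrow> gB j)" for v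
  have "\<forall>v\<in>Kbip_V n0 n1. finite (S v) \<and> t \<le> card (S v)"
  proof
    fix v assume "v \<in> Kbip_V n0 n1"
    then show "finite (S v) \<and> t \<le> card (S v)"
      unfolding Kbip_V_def S_def using gA1 gB1
      by auto (meson finite_lessThan finite_subset)+
  qed
  with ch have "list_colorable (Kbip_V n0 n1) Kbip_E S" unfolding choosable_def by blast
  then obtain f where f1: "\<forall>v\<in>Kbip_V n0 n1. f v \<in> S v"
    and f2: "\<forall>u\<in>Kbip_V n0 n1. \<forall>v\<in>Kbip_V n0 n1. Kbip_E u v \<longrightarrow> f u \<noteq> f v"
    unfolding list_colorable_def by blast
  have fA: "f (Inl i) \<in> gA i" if "i < n0" for i
  proof -
    have "Inl i \<in> Kbip_V n0 n1" using that unfolding Kbip_V_def by auto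
    then have "f (Inl i) \<in> S (Inl i)" using f1 by blast
    then show ?thesis by (simp add: S_def)
  qed
  have fB: "f (Inr j) \<in> gB j" if "j < n1" for j
  proof -
    have "Inr j \<in> Kbip_V n0 n1" using that unfolding Kbip_V_def by auto
    then have "f (Inr j) \<in> S (Inr j)" using f1 by blast
    then show ?thesis by (simp add: S_def)
  qed
  have dif: "f (Inl i) \<noteq> f (Inr j)" if "i < n0" "j < n1" for i j
    using f2 that unfolding Kbip_V_def Kbip_E_def by auto
  define Y where "Y = (\<lambda>i. f (Inl i)) ` {..<n0}"
  have YN: "Y \<subseteq> {..<N}" unfolding Y_def using fA gA1 by blast
  have finY: "finite Y" unfolding Y_def by simp
  show False
  proof (cases "s \<le> card Y")
    case True
    then obtain X where X: "X \<subseteq> Y" "card X = s" by (meson obtain_subset_with_card_n)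
    then obtain j where j: "j < n1" "gB j \<subseteq> X" using gB2 YN by blast
    then have "f (Inr j) \<in> Y" using fB X by blast
    then show False unfolding Y_def using dif j by (auto; metis)
  next
    case False
    define Z where "Z = {..<N} - Y"
    have "card Z = N - card Y" unfolding Z_def using YN by (simp add: card_Diff_subset finY)
    then have "N - s + 1 \<le> card Z" using False assms(1) by linarith
    then obtain X where X: "X \<subseteq> Z" "card X = N - s + 1" by (meson obtain_subset_with_card_n)
    then obtain i where i: "i < n0" "gA i \<subseteq> X" using gA2 unfolding Z_def by blast
    then have "f (Inl i) \<in> Z" using fA X by blast
    then show False unfolding Z_def Y_def using i by auto
  qed
qed



lemma choosable_big: "choosable (Kbip_V n0 n1) Kbip_E (n0+1)"
  unfolding choosable_def list_colorable_def
proof (intro allI impI)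
  fix S :: "nat + nat \<Rightarrow> nat set"
  assume S: "\<forall>v\<in>Kbip_V n0 n1. finite (S v) \<and> n0 + 1 \<le> card (S v)"
  define fa where "fa i = (SOME c. c \<in> S (Inl i))" for i
  have fa: "fa i \<in> S (Inl i)" if "i < n0" for i
  proof -
    have "Inl i \<in> Kbip_V n0 n1" using that unfolding Kbip_V_def by auto
    then have "S (Inl i) \<noteq> {}" using S by fastforce
    then show ?thesis unfolding fa_def by (metis all_not_in_conv someI)
  qed
  define Y where "Y = fa ` {..<n0}"
  have cY: "card Y \<le> n0" unfolding Y_def using card_image_le[of "{..<n0}" fa] by simp
  define fb where "fb j = (SOME c. c \<in> S (Inr j) - Y)" for j
  have fb: "fb j \<in> S (Inr j) - Y" if "j < n1" for j
  proof -
    have "Inr j \<in> Kbip_V n0 n1" using that unfolding Kbip_V_def by auto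
    then have "finite (S (Inr j))" "n0 + 1 \<le> card (S (Inr j))" using S by auto
    then have "card Y < card (S (Inr j))" using cY by linarith
    then have "S (Inr j) - Y \<noteq> {}"
      by (metis Diff_eq_empty_iff \<open>finite (S (Inr j))\<close> card_mono finite_subset leD Y_def finite_imageI finite_lessThan)
    then show ?thesis unfolding fb_def by (metis all_not_in_conv someI)
  qed
  define f where "f v = (case v of Inl i \<Rightarrow> fa i | Inr j \<Rightarrow> fb j)" for v
  show "\<exists>f. (\<forall>v\<in>Kbip_V n0 n1. f v \<in> S v) \<and>
         (\<forall>u\<in>Kbip_V n0 n1. \<forall>v\<in>Kbip_V n0 n1. Kbip_E u v \<longrightarrow> f u \<noteq> f v)"
  proof (intro exI conjI ballI impI)
    fix v assume "v \<in> Kbip_V n0 n1"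
    then show "f v \<in> S v" unfolding Kbip_V_def f_def using fa fb by auto
  next
    fix u v assume uv: "u \<in> Kbip_V n0 n1" "v \<in> Kbip_V n0 n1" "Kbip_E u v"
    have "fa i \<noteq> fb j" if "i < n0" "j < n1" for i j
      using fb[OF that(2)] that(1) unfolding Y_def by (metis DiffD2 image_eqI lessThan_iff)
    then show "f u \<noteq> f v" using uv unfolding Kbip_V_def Kbip_E_def f_def by (auto; metis)
  qed
qed

lemma nonchoosable_mono:
  assumes "\<not> choosable V E t" "k \<le> t" shows "\<not> choosable V E k"
  using assms unfolding choosable_def by (meson order_trans)

lemma ch_lower:
  assumes "\<not> choosable (Kbip_V n0 n1) Kbip_E t"
  shows "t + 1 \<le> ch_Kbip n0 n1"
proof (rule ccontr)
  assume "\<not> t + 1 \<le> ch_Kbip n0 n1"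
  then have le: "ch_Kbip n0 n1 \<le> t" by simp
  have "choosable (Kbip_V n0 n1) Kbip_E (ch_Kbip n0 n1)"
    unfolding ch_Kbip_def choice_number_def by (rule LeastI[of "choosable (Kbip_V n0 n1) Kbip_E", OF choosable_big])
  then show False using nonchoosable_mono[OF assms le] by simp
qed

lemma binom_ratio:
  fixes t r N :: nat
  assumes "t \<le> r" "r \<le> N"
  shows "real (N choose t) * ((real r - real t) / real N)^t \<le> real (r choose t)"
  using assms(1)
proof (induction t)
  case 0
  then show ?case by simp
next
  case (Suc t)
  have tr: "t < r" using Suc by simp
  have N0: "real N > 0" using tr assms(2) by simp
  define c where "c = (real r - real t - 1) / real N"
  define d where "d = (real r - real t) / real N"
  have c0: "0 \<le> c" unfolding c_def using tr N0 by simp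
  have cd: "c \<le> d" unfolding c_def d_def using N0 by (simp add: divide_right_mono)
  have IH: "real (N choose t) * d^t \<le> real (r choose t)" using Suc tr unfolding d_def by simp
  have e1: "real (N choose Suc t) * (real t + 1) = real (N choose t) * (real N - real t)"
  proof -
    have "(N choose Suc t) * Suc t = (N choose t) * (N - t)"
      using binomial_absorb_comp[of N t] Suc_times_binomial_eq[of "N-1" t]
      by (metis Suc_times_binomial times_binomial_minus1_eq zero_less_Suc binomial_absorb_comp diff_Suc_1 mult.commute)
    then have "real ((N choose Suc t) * Suc t) = real ((N choose t) * (N - t))" by simp
    then show ?thesis using tr assms(2) by (simp add: of_nat_diff algebra_simps)
  qed
  have e2: "real (r choose Suc t) * (real t + 1) = real (r choose t) * (real r - real t)"
  proof -
    have "(r choose Suc t) * Suc t = (r choose t) * (r - t)"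
      by (metis Suc_times_binomial times_binomial_minus1_eq zero_less_Suc binomial_absorb_comp diff_Suc_1 mult.commute)
    then have "real ((r choose Suc t) * Suc t) = real ((r choose t) * (r - t))" by simp
    then show ?thesis using tr by (simp add: of_nat_diff algebra_simps)
  qed
  have "real (N choose Suc t) * c^Suc t * (real t + 1) = c^t * c * (real (N choose Suc t) * (real t + 1))"
    by (simp add: algebra_simps)
  also have "\<dots> = real (N choose t) * c^t * ((real N - real t) * c)"
    unfolding e1 by (simp add: algebra_simps)
  also have "\<dots> \<le> real (N choose t) * d^t * ((real N - real t) * c)"
    using c0 cd tr assms(2) by (intro mult_right_mono mult_left_mono power_mono) auto
  also have "\<dots> \<le> real (r choose t) * ((real N - real t) * c)"
    using IH c0 tr assms(2) by (intro mult_right_mono) auto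
  also have "\<dots> \<le> real (r choose t) * (real r - real t)"
  proof (intro mult_left_mono)
    have "(real N - real t) * c \<le> real N * c" using c0 by (simp add: mult_right_mono)
    also have "\<dots> = real r - real t - 1" unfolding c_def using N0 by simp
    finally show "(real N - real t) * c \<le> real r - real t" by simp
  qed auto
  also have "\<dots> = real (r choose Suc t) * (real t + 1)" using e2 by simp
  finally have "real (N choose Suc t) * c^Suc t \<le> real (r choose Suc t)"
    by (simp add: mult_le_cancel_right) 
  moreover have "c = (real r - real (Suc t)) / real N" unfolding c_def by simp
  ultimately show ?case by simp
qed

lemma count_cond:
  fixes N r t m :: nat
  assumes "t \<le> r" "r \<le> N" "1 \<le> N"
    and big: "real N \<le> real m * ((real r - real t) / real N)^t"
  shows "(N choose r) * ((N choose t) - (r choose t))^m < (N choose t)^m"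
proof -
  define B where "B = real (N choose t)"
  have B0: "B > 0" unfolding B_def using assms by simp
  have rt: "r choose t \<le> N choose t" using assms by (simp add: binomial_right_mono)
  define p where "p = real (r choose t) / B"
  have p0: "0 \<le> p" unfolding p_def using B0 by simp
  have p1: "p \<le> 1" unfolding p_def B_def using rt B0 B_def by simp
  have pq: "((real r - real t) / real N)^t \<le> p"
    unfolding p_def using binom_ratio[OF assms(1,2)] B0 unfolding B_def by (simp add: field_simps)
  have mp: "real N \<le> real m * p" using big pq by (meson mult_left_mono of_nat_0_le_iff order_trans)
  have "(1 - p)^m \<le> exp (-p)^m"
    using p1 exp_ge_add_one_self[of "-p"] by (intro power_mono) auto
  also have "\<dots> = exp (- (real m * p))" by (simp add: exp_of_nat_mult[symmetric])
  also have "\<dots> \<le> exp (- real N)" using mp by simp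
  finally have e: "(1 - p)^m \<le> exp (- real N)" .
  have "real (N choose r) * (B - real (r choose t))^m = real (N choose r) * (B^m * (1-p)^m)"
    unfolding p_def using B0 by (simp add: power_mult_distrib[symmetric] field_simps)
  also have "\<dots> \<le> 2^N * (B^m * exp (- real N))"
    using e B0 binomial_le_pow2[of N r] p1
    by (intro mult_mono mult_left_mono) (auto simp: of_nat_le_iff[symmetric])
  also have "\<dots> < B^m"
  proof -
    have "2^N * exp (- real N) = (2 / exp 1)^N"
      by (simp add: power_divide exp_of_nat_mult[symmetric] exp_minus field_simps)
    also have "\<dots> < 1"
    proof -
      have "2 < exp (1::real)" using exp_ge_add_one_self[of 1] e_approx_32 by (simp add: abs_if split: if_splits)
      then have "2 / exp 1 < (1::real)" by simp
      then show ?thesis using assms(3) by (subst power_less_one_iff) auto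
    qed
    finally show ?thesis using B0 by simp
  qed
  finally have "real ((N choose r) * ((N choose t) - (r choose t))^m) < real ((N choose t)^m)"
    using rt unfolding B_def by (simp add: of_nat_diff)
  then show ?thesis by (simp only: of_nat_less_iff)
qed



lemma powr_strict_gap:
  fixes x y e :: real
  assumes "1 \<le> x" "x < y" "0 \<le> e" "e < 1"
  shows "y powr e - x powr e < y - x"
proof (cases "e = 0")
  case True then show ?thesis using assms by simp
next
  case False
  define q where "q = y / x"
  have q1: "1 < q" unfolding q_def using assms by simp
  have yq: "y = x * q" unfolding q_def using assms by simp
  have "y powr e = x powr e * q powr e" unfolding yq using assms q1 by (simp add: powr_mult)
  moreover have "q powr e < q" using powr_less_mono[of e 1 q] q1 assms by simp
  moreover have "x powr e \<le> x" using powr_mono[of e 1 x] assms by simp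
  moreover have "x powr e > 0" using assms by simp
  ultimately have "y powr e - x powr e < x powr e * (q - 1)"
    by (simp add: algebra_simps)
  also have "\<dots> \<le> x * (q - 1)" using \<open>x powr e \<le> x\<close> q1 by (simp add: mult_right_mono)
  also have "\<dots> = y - x" unfolding yq by (simp add: algebra_simps)
  finally show ?thesis .
qed

lemma root_x0_props:
  fixes k :: real
  assumes k: "1 \<le> k"
  shows "1 \<le> root_x0 k" "root_x0 k - 1 = root_x0 k powr ((k - 1) / k)"
proof -
  define e where "e = (k - 1) / k"
  have e0: "0 \<le> e" "e < 1" unfolding e_def using k by auto
  define g where "g x = x - 1 - x powr e" for x
  define M where "M = 2 * k + 1"
  have M3: "3 \<le> M" unfolding M_def using k by simp
  have gM: "0 \<le> g M"
  proof -
    have "e = 1 - 1 / k" unfolding e_def using k by (simp add: field_simps)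
    then have Me: "M powr e = M / M powr (1 / k)" using M3 by (simp add: powr_diff)
    have "ln 2 \<le> ln M" using M3 by simp
    then have lnM: "1/2 \<le> ln M" using ln2_ge_two_thirds by linarith
    have "M powr (1 / k) = exp (ln M / k)" using M3 by (simp add: powr_def)
    also have "\<dots> \<ge> 1 + ln M / k" using exp_ge_add_one_self by blast
    finally have "M powr (1/k) \<ge> 1 + (1/2) / k" using lnM k by (smt (verit) divide_right_mono)
    moreover have "0 < 1 + (1/2)/k" using k by (simp add: add_pos_pos)
    ultimately have "M / M powr (1/k) \<le> M / (1 + (1/2)/k)" using M3 k
      by (intro divide_left_mono mult_pos_pos) auto
    also have "\<dots> \<le> M - 1" using k unfolding M_def by (simp add: field_simps)
    finally show ?thesis unfolding g_def Me by simp
  qed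
  have g1: "g 1 \<le> 0" unfolding g_def by simp
  have cont: "continuous_on {1..M} g" unfolding g_def by (intro continuous_intros) auto
  obtain x where x: "1 \<le> x" "x \<le> M" "g x = 0" using IVT'[of g 1 0 M, OF g1 gM _ cont] M3 by auto
  have uniq: "y = x" if "1 \<le> y" "g y = 0" for y
  proof (rule ccontr)
    assume "y \<noteq> x"
    then consider "x < y" | "y < x" by linarith
    then show False
    proof cases
      case 1 then show False using powr_strict_gap[OF x(1) 1 e0] x that unfolding g_def by simp
    next
      case 2 then show False using powr_strict_gap[OF that(1) 2 e0] x that unfolding g_def by simp
    qed
  qed
  have ex: "\<exists>!x. 1 \<le> x \<and> x - 1 - x powr ((k - 1) / k) = 0"
    using x uniq unfolding g_def e_def by blast
  have "1 \<le> root_x0 k \<and> root_x0 k - 1 - root_x0 k powr ((k - 1) / k) = 0"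
    unfolding root_x0_def by (rule theI'[OF ex])
  then show "1 \<le> root_x0 k" "root_x0 k - 1 = root_x0 k powr ((k - 1) / k)" by auto
qed

lemma root_x0_bounds:
  fixes k :: real
  assumes k: "1 \<le> k"
  shows "2 \<le> root_x0 k" "root_x0 k \<le> 2 * k + 1"
    "(root_x0 k - 1) / root_x0 k = root_x0 k powr (- 1 / k)"
proof -
  define x where "x = root_x0 k"
  have x1: "1 \<le> x" and eq: "x - 1 = x powr ((k - 1) / k)"
    using root_x0_props[OF k] unfolding x_def by auto
  have "1 \<le> x powr ((k - 1) / k)" using x1 k by (intro ge_one_powr_ge_zero) auto
  then show x2: "2 \<le> root_x0 k" using eq unfolding x_def by simp
  then have x2': "2 \<le> x" unfolding x_def .
  have "(k - 1) / k = 1 - 1 / k" using k by (simp add: field_simps)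
  then have eq2: "x - 1 = x / x powr (1 / k)" using eq x1 by (simp add: powr_diff)
  have pk: "x powr (1/k) > 0" using x1 by simp
  have b: "(x - 1) / x = x powr (- 1 / k)"
    using eq2 x1 pk by (simp add: powr_minus_divide field_simps)
  then show "(root_x0 k - 1) / root_x0 k = root_x0 k powr (- 1 / k)" unfolding x_def .
  have "x powr (1/k) = x / (x - 1)" using eq2 pk x2' by (simp add: field_simps)
  then have "ln (x powr (1/k)) = ln (x / (x - 1))" by simp
  then have "ln x / k = ln (x / (x - 1))" using x1 by (simp add: ln_powr)
  also have "\<dots> \<le> x / (x - 1) - 1" using x2' by (intro ln_le_minus_one) auto
  also have "\<dots> = 1 / (x - 1)" using x2' by (simp add: field_simps)
  finally have l1: "ln x / k \<le> 1 / (x - 1)" .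
  have "2/3 \<le> ln x" using ln2_ge_two_thirds x2' by (smt (verit) ln_le_cancel_iff)
  then have "(2/3) / k \<le> 1 / (x - 1)" using l1 k by (smt (verit) divide_right_mono)
  then have "x - 1 \<le> 3 * k / 2" using x2' k by (simp add: field_simps)
  then show "root_x0 k \<le> 2 * k + 1" unfolding x_def using k by simp
qed



lemma main_bound:
  fixes n0 n1 :: nat and \<delta> :: real
  assumes n0: "2 \<le> n0" and n01: "n0 \<le> n1" and d0: "0 < \<delta>" and d1: "\<delta> < 1"
    and LL: "1 \<le> log 2 (log 2 (real n1))"
    and key: "7 * log 2 (log 2 (real n1)) \<le> \<delta> * log 2 (real n0)"
  shows "(1 - \<delta>) * log 2 (real n1) / log 2 (root_x0 (log 2 (real n1) / log 2 (real n0)))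
         \<le> real (ch_Kbip n0 n1)"
proof -
  define a where "a = log 2 (real n0)"
  define L where "L = log 2 (real n1)"
  have a1: "1 \<le> a" unfolding a_def using n0 by simp
  have aL: "a \<le> L" unfolding a_def L_def using n0 n01 by simp
  have L1: "1 \<le> L" using a1 aL by simp
  have n0a: "real n0 = 2 powr a" unfolding a_def using n0 by simp
  have n1L: "real n1 = 2 powr L" unfolding L_def using n0 n01 by simp
  define k where "k = L / a"
  have k1: "1 \<le> k" unfolding k_def using a1 aL by simp
  have kL: "k \<le> L" unfolding k_def using a1 L1 by (simp add: field_simps)
  have Lk: "L / k = a" unfolding k_def using a1 L1 by simp
  define x where "x = root_x0 k"
  have x2: "2 \<le> x" and xk: "x \<le> 2 * k + 1" and xb: "(x - 1) / x = x powr (- 1 / k)"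
    using root_x0_bounds[OF k1] unfolding x_def by auto
  define lx where "lx = log 2 x"
  have lx1: "1 \<le> lx" unfolding lx_def using x2 by simp
  have xlx: "x = 2 powr lx" unfolding lx_def using x2 by simp
  define B where "B = (1 - \<delta>) * L / lx"
  have B0: "0 \<le> B" unfolding B_def using d1 L1 lx1 by simp
  define t where "t = nat \<lfloor>B\<rfloor>"
  have tB: "real t \<le> B" "B < real t + 1" unfolding t_def using B0 by linarith+
  have tlx: "real t * lx \<le> (1 - \<delta>) * L" using tB(1) lx1 unfolding B_def by (simp add: field_simps)
  have tL: "real t \<le> L"
  proof -
    have "B \<le> (1 - \<delta>) * L" unfolding B_def using lx1 d1 L1
      by (simp add: divide_le_eq)
    then show ?thesis using tB d0 L1 by (smt (verit) mult_le_cancel_right1)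
  qed
  define N where "N = nat \<lceil>2 * real t ^ 2 * x\<rceil> + 1"
  have N1: "1 \<le> N" unfolding N_def by simp
  have Nlo: "2 * real t ^ 2 * x \<le> real N" unfolding N_def by linarith
  have Nhi: "real N \<le> 2 * real t ^ 2 * x + 2"
  proof -
    have y0: "0 \<le> 2 * real t ^ 2 * x" using x2 by simp
    then have "real (nat \<lceil>2 * real t ^ 2 * x\<rceil>) = of_int \<lceil>2 * real t ^ 2 * x\<rceil>" by simp
    moreover have "of_int \<lceil>2 * real t ^ 2 * x\<rceil> \<le> 2 * real t ^ 2 * x + 1" by (rule of_int_ceiling_le_add_one)
    moreover have "real N = real (nat \<lceil>2 * real t ^ 2 * x\<rceil>) + 1" unfolding N_def by simp
    ultimately show ?thesis by linarith
  qed
  define \<alpha> where "\<alpha> = 1 / x"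
  define \<beta> where "\<beta> = 1 - \<alpha>"
  have \<alpha>0: "0 < \<alpha>" "\<alpha> \<le> 1/2" unfolding \<alpha>_def using x2 by auto
  have \<beta>h: "1/2 \<le> \<beta>" unfolding \<beta>_def using \<alpha>0 by simp
  define s where "s = nat \<lceil>\<alpha> * real N\<rceil>"
  have slo: "\<alpha> * real N \<le> real s" and shi: "real s < \<alpha> * real N + 1"
    unfolding s_def using \<alpha>0 N1 ceiling_correct[of "\<alpha> * real N"] by (linarith, simp)
  have sN: "s \<le> N"
  proof -
    have "\<alpha> * real N \<le> real N" using \<alpha>0 N1 by simp
    then show ?thesis unfolding s_def by (simp add: ceiling_le_iff nat_le_iff)
  qed
  have s1: "1 \<le> s" using slo \<alpha>0 N1 by (smt (verit) of_nat_0_less_iff of_nat_le_0_iff mult_pos_pos less_one not_le of_nat_1)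
  define \<epsilon> where "\<epsilon> = real t * x / real N"
  have te: "real t * \<epsilon> \<le> 1/2"
  proof -
    have "real t * \<epsilon> = real t ^ 2 * x / real N" unfolding \<epsilon>_def by (simp add: power2_eq_square)
    also have "\<dots> \<le> 1/2" using Nlo N1 by (simp add: divide_le_eq)
    finally show ?thesis .
  qed
  have e0: "0 \<le> \<epsilon>" unfolding \<epsilon>_def using x2 by simp
  have e12: "\<epsilon> \<le> 1/2"
  proof (cases "t = 0")
    case True then show ?thesis unfolding \<epsilon>_def by simp
  next
    case False then have "\<epsilon> \<le> real t * \<epsilon>" using e0 by (simp add: mult_le_cancel_right1)
    then show ?thesis using te by simp
  qed
  have pe: "1/2 \<le> (1 - \<epsilon>)^t"
  proof -
    have "1 + real t * (- \<epsilon>) \<le> (1 + (- \<epsilon>))^t" using e12 by (intro Bernoulli_inequality) simp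
    then show ?thesis using te by simp
  qed
  have ae: "\<alpha> * \<epsilon> = real t / real N" unfolding \<alpha>_def \<epsilon>_def using x2 by simp
  have hB: "\<alpha> * (1 - \<epsilon>) \<le> (real s - real t) / real N"
  proof -
    have "\<alpha> * (1 - \<epsilon>) = (\<alpha> * real N - real t) / real N" using ae N1 by (simp add: field_simps)
    also have "\<dots> \<le> (real s - real t) / real N" using slo by (simp add: divide_right_mono)
    finally show ?thesis .
  qed
  have ts: "t \<le> s"
  proof -
    have "0 \<le> \<alpha> * (1 - \<epsilon>)" using \<alpha>0 e12 by simp
    then have "0 \<le> (real s - real t) / real N" using hB by linarith
    then show ?thesis using N1 by (simp add: zero_le_divide_iff)
  qed
  define r where "r = N - s + 1"
  have rr: "real r = real N - real s + 1" unfolding r_def using sN by (simp add: of_nat_diff)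
  have rN: "r \<le> N" unfolding r_def using s1 sN by simp
  have be: "real t / real N \<le> \<beta> * \<epsilon>"
  proof -
    have "\<beta> * \<epsilon> = (x - 1) * real t / real N" unfolding \<beta>_def \<alpha>_def \<epsilon>_def using x2 N1 by (simp add: field_simps)
    moreover have "real t \<le> (x - 1) * real t" using x2 by (simp add: mult_le_cancel_right1)
    ultimately show ?thesis using N1 by (simp add: divide_right_mono)
  qed
  have hA: "\<beta> * (1 - \<epsilon>) \<le> (real r - real t) / real N"
  proof -
    have "\<beta> * real N \<le> real r" unfolding rr \<beta>_def using shi by (simp add: algebra_simps)
    then have "\<beta> \<le> real r / real N" using N1 by (simp add: le_divide_eq)
    then have "\<beta> * (1 - \<epsilon>) \<le> real r / real N - real t / real N" using be by (simp add: algebra_simps)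
    also have "\<dots> = (real r - real t) / real N" by (simp add: diff_divide_distrib)
    finally show ?thesis .
  qed
  have tr: "t \<le> r"
  proof -
    have "0 \<le> \<beta> * (1 - \<epsilon>)" using \<beta>h e12 by simp
    then have "0 \<le> (real r - real t) / real N" using hA by linarith
    then show ?thesis using N1 by (simp add: zero_le_divide_iff)
  qed
  have aT: "2 powr (- ((1 - \<delta>) * L)) \<le> \<alpha> ^ t"
  proof -
    have "\<alpha> = 2 powr (- lx)" unfolding \<alpha>_def xlx by (simp add: powr_minus_divide)
    then have "\<alpha> ^ t = 2 powr (- lx * real t)" by (simp add: powr_realpow[symmetric] powr_powr)
    moreover have "- ((1 - \<delta>) * L) \<le> - lx * real t" using tlx by (simp add: algebra_simps)
    ultimately show ?thesis by simp
  qed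
  have bT: "2 powr (- ((1 - \<delta>) * a)) \<le> \<beta> ^ t"
  proof -
    have "\<beta> = (x - 1) / x" unfolding \<beta>_def \<alpha>_def using x2 by (simp add: field_simps)
    also have "\<dots> = x powr (- 1 / k)" by (rule xb)
    also have "\<dots> = 2 powr (- lx / k)" by (subst xlx) (simp add: powr_powr)
    finally have "\<beta> ^ t = 2 powr (- lx / k * real t)" by (simp add: powr_realpow[symmetric] powr_powr)
    moreover have "- ((1 - \<delta>) * a) \<le> - lx / k * real t"
    proof -
      have "lx / k * real t = (real t * lx) / k" by simp
      also have "\<dots> \<le> (1 - \<delta>) * L / k" using tlx k1 by (simp add: divide_right_mono)
      also have "\<dots> = (1 - \<delta>) * (L / k)" by simp
      also have "\<dots> = (1 - \<delta>) * a" using Lk by simp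
      finally show ?thesis by simp
    qed
    ultimately show ?thesis by simp
  qed
  have big: "2 * real N \<le> 2 powr (\<delta> * a)"
  proof -
    have "2 * real N \<le> 4 * real t ^ 2 * x + 4" using Nhi by simp
    also have "\<dots> \<le> 4 * L ^ 2 * (3 * L) + 4"
    proof -
      have "x \<le> 3 * L" using xk kL L1 by simp
      moreover have "real t ^ 2 \<le> L ^ 2" using tL by (simp add: power_mono)
      ultimately show ?thesis using x2 by (smt (verit) mult_mono zero_le_power2 mult_left_mono)
    qed
    also have "\<dots> \<le> 16 * L ^ 3"
    proof -
      have L3: "1 \<le> L ^ 3" using L1 by simp
      have "4 * L ^ 2 * (3 * L) = 12 * L ^ 3" by (simp add: power2_eq_square power3_eq_cube)
      then show ?thesis using L3 by linarith
    qed
    also have "\<dots> = 2 powr (4 + 3 * log 2 L)"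
    proof -
      have "2 powr (4 + 3 * log 2 L) = 2 powr 4 * (2 powr (log 2 L)) powr 3"
        by (simp add: powr_add powr_powr mult.commute)
      also have "\<dots> = 16 * L powr 3" using L1 by simp
      also have "\<dots> = 16 * L ^ 3" using L1 by (simp add: powr_numeral)
      finally show ?thesis by simp
    qed
    also have "\<dots> \<le> 2 powr (7 * log 2 L)" using LL unfolding L_def by simp
    also have "\<dots> \<le> 2 powr (\<delta> * a)" using key unfolding L_def a_def by simp
    finally show ?thesis .
  qed
  have condB: "real N \<le> real n1 * ((real s - real t) / real N)^t"
  proof -
    have "(\<alpha> * (1 - \<epsilon>))^t \<le> ((real s - real t) / real N)^t"
      using hB \<alpha>0 e12 by (intro power_mono) auto
    moreover have "\<alpha>^t / 2 \<le> (\<alpha> * (1 - \<epsilon>))^t"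
      using pe \<alpha>0 by (simp add: power_mult_distrib)
    ultimately have "2 powr (- ((1 - \<delta>) * L)) / 2 \<le> ((real s - real t) / real N)^t" using aT by simp
    then have "real n1 * (2 powr (- ((1 - \<delta>) * L)) / 2) \<le> real n1 * ((real s - real t) / real N)^t"
      by (intro mult_left_mono) auto
    moreover have "real n1 * (2 powr (- ((1 - \<delta>) * L)) / 2) = 2 powr (\<delta> * L) / 2"
      unfolding n1L by (simp add: powr_add[symmetric] algebra_simps)
    moreover have pp: "2 powr (\<delta> * a) \<le> 2 powr (\<delta> * L)" using aL d0 by simp
    ultimately show ?thesis using big pp by linarith
  qed
  have condA: "real N \<le> real n0 * ((real r - real t) / real N)^t"
  proof -
    have "(\<beta> * (1 - \<epsilon>))^t \<le> ((real r - real t) / real N)^t"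
      using hA \<beta>h e12 by (intro power_mono) auto
    moreover have "\<beta>^t / 2 \<le> (\<beta> * (1 - \<epsilon>))^t"
      using pe \<beta>h by (simp add: power_mult_distrib)
    ultimately have "2 powr (- ((1 - \<delta>) * a)) / 2 \<le> ((real r - real t) / real N)^t" using bT by simp
    then have "real n0 * (2 powr (- ((1 - \<delta>) * a)) / 2) \<le> real n0 * ((real r - real t) / real N)^t"
      by (intro mult_left_mono) auto
    moreover have "real n0 * (2 powr (- ((1 - \<delta>) * a)) / 2) = 2 powr (\<delta> * a) / 2"
      unfolding n0a by (simp add: powr_add[symmetric] algebra_simps)
    ultimately show ?thesis using big by linarith
  qed
  obtain gB where gB1: "\<And>j. j<n1 \<Longrightarrow> gB j \<subseteq> {..<N} \<and> card (gB j) = t"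
    and gB2: "\<And>X. X \<subseteq> {..<N} \<Longrightarrow> card X = s \<Longrightarrow> \<exists>j<n1. gB j \<subseteq> X"
    using covering[OF ts sN count_cond[OF ts sN N1 condB]] by blast
  obtain gA where gA1: "\<And>i. i<n0 \<Longrightarrow> gA i \<subseteq> {..<N} \<and> card (gA i) = t"
    and gA2: "\<And>X. X \<subseteq> {..<N} \<Longrightarrow> card X = N - s + 1 \<Longrightarrow> \<exists>i<n0. gA i \<subseteq> X"
    using covering[OF tr rN count_cond[OF tr rN N1 condA]] unfolding r_def by blast
  have "\<not> choosable (Kbip_V n0 n1) Kbip_E t"
    by (rule nonchoosable[OF sN gA1 gA2 gB1 gB2])
  then have "t + 1 \<le> ch_Kbip n0 n1" by (rule ch_lower)
  then have "B \<le> real (ch_Kbip n0 n1)" using tB by linarith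
  then show ?thesis unfolding B_def L_def lx_def x_def k_def a_def .
qed



theorem theorem3:
  fixes n0 n1 :: "nat \<Rightarrow> nat"
  assumes "\<And>m. 2 \<le> n0 m" and "\<And>m. n0 m \<le> n1 m"
    and "filterlim n1 at_top sequentially"
    and "filterlim (\<lambda>m. log 2 (real (n0 m)) / log 2 (log 2 (real (n1 m)))) at_top sequentially"
  shows "\<forall>\<delta>>0. eventually (\<lambda>m.
           real (ch_Kbip (n0 m) (n1 m)) \<ge>
             (1 - \<delta>) * log 2 (real (n1 m))
               / log 2 (root_x0 (log 2 (real (n1 m)) / log 2 (real (n0 m)))))
         sequentially"
proof (intro allI impI)
  fix \<delta> :: real assume d0: "0 < \<delta>"
  show "eventually (\<lambda>m. real (ch_Kbip (n0 m) (n1 m)) \<ge>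
             (1 - \<delta>) * log 2 (real (n1 m))
               / log 2 (root_x0 (log 2 (real (n1 m)) / log 2 (real (n0 m))))) sequentially"
  proof (cases "\<delta> < 1")
    case False
    show ?thesis
    proof (rule always_eventually, rule allI)
      fix m
      have a1: "1 \<le> log 2 (real (n0 m))" using assms(1)[of m] by simp
      have aL: "log 2 (real (n0 m)) \<le> log 2 (real (n1 m))" using assms(1,2)[of m] by simp
      have k1: "1 \<le> log 2 (real (n1 m)) / log 2 (real (n0 m))" using a1 aL by simp
      have "2 \<le> root_x0 (log 2 (real (n1 m)) / log 2 (real (n0 m)))" using root_x0_bounds(1)[OF k1] .
      then have lp: "0 < log 2 (root_x0 (log 2 (real (n1 m)) / log 2 (real (n0 m))))" by simp
      have "(1 - \<delta>) * log 2 (real (n1 m)) \<le> 0" using False a1 aL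
        by (intro mult_nonpos_nonneg) auto
      then have "(1 - \<delta>) * log 2 (real (n1 m))
               / log 2 (root_x0 (log 2 (real (n1 m)) / log 2 (real (n0 m)))) \<le> 0"
        using lp by (simp add: divide_nonpos_pos)
      then show "real (ch_Kbip (n0 m) (n1 m)) \<ge>
             (1 - \<delta>) * log 2 (real (n1 m))
               / log 2 (root_x0 (log 2 (real (n1 m)) / log 2 (real (n0 m))))" by simp
    qed
  next
    case True
    have ev1: "eventually (\<lambda>m. 4 \<le> n1 m) sequentially"
      using assms(3) by (simp add: filterlim_at_top)
    have ev2: "eventually (\<lambda>m. 7 / \<delta> \<le> log 2 (real (n0 m)) / log 2 (log 2 (real (n1 m)))) sequentially"
      using assms(4) by (simp add: filterlim_at_top)
    show ?thesis
    proof (rule eventually_mono[OF eventually_conj[OF ev1 ev2]], elim conjE)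
      fix m assume h1: "4 \<le> n1 m" and h2: "7 / \<delta> \<le> log 2 (real (n0 m)) / log 2 (log 2 (real (n1 m)))"
      have "(2::real) powr 2 \<le> real (n1 m)" using h1 by (simp add: powr_numeral)
      then have "2 \<le> log 2 (real (n1 m))" using h1 by (subst le_log_iff) auto
      then have LL: "1 \<le> log 2 (log 2 (real (n1 m)))" by simp
      have "7 / \<delta> * log 2 (log 2 (real (n1 m))) \<le> log 2 (real (n0 m))"
        using h2 LL by (simp add: le_divide_eq)
      then have key: "7 * log 2 (log 2 (real (n1 m))) \<le> \<delta> * log 2 (real (n0 m))"
        using d0 by (simp add: divide_le_eq field_simps)
      show "real (ch_Kbip (n0 m) (n1 m)) \<ge>
             (1 - \<delta>) * log 2 (real (n1 m))
               / log 2 (root_x0 (log 2 (real (n1 m)) / log 2 (real (n0 m))))"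
        using main_bound[OF assms(1,2) d0 True LL key] .
    qed
  qed
qed

end
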